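(* Let $S=\mathcal{M}^0(I,J,G,P)$ be a regular Rees matrix semigroup with $|I|=m$, $|J|=n$, normalized so that $p_{11}=1$ and $p_{1l}\in\{0,1\}$ for all $l\in I$. Let $\sigma:G\to GL_k(\mathbb{C})$ be a matrix representation of $G$, and let $\pi^l,\pi^r$ be the associated standard representations of $S$. If both $\pi^l$ and $\pi^r$ are semiunitary, then (1) $\sigma$ is unitary, i.e. $\sigma(a)\sigma(a)^{*}=E$ for all $a\in G$, and (2) $S$ is an inverse semigroup.
   Context: Let $I=\{1,\dots,m\}$, $J=\{1,\dots,n\}$, $G$ a finite group, $G^0=G\cup\{0\}$, and $P=(p_{ji})$ an $n\times m$ matrix ($j\in J$, $i\in I$) with entries in $G^0$. $\mathcal{M}^0(I,J,G,P)$ consists of the elements $(a)_{ij}$ ($a\in G$, $i\in I$, $j\in J$; the $I\times J$ matrix with $a$ in entry $(i,j)$ and $0$ elsewhere) together with a zero $0$, with product $(a)_{ij}\circ(b)_{kl}=(ap_{jk}b)_{il}$ if $p_{jk}\neq 0$ and $0$ otherwise. It is regular if every row and every column of $P$ has a nonzero entry. Given $\sigma$, extend by $\sigma(0)=0$; the standard representations are: $\pi^l((a)_{ij})\in M_{mk}(\mathbb{C})$ is the $m\times m$ block matrix (blocks of size $k$) whose $(i,l)$ block is $\sigma(ap_{jl})$ for $l\in I$ and all other blocks zero (i.e. $\sigma$ applied entrywise to $(a)_{ij}P$); $\pi^r((a)_{ij})\in M_{nk}(\mathbb{C})$ is the $n\times n$ block matrix whose $(l,j)$ block is $\sigma(p_{li}a)$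 for $l\in J$ and others zero (i.e. $\sigma$ applied to $P(a)_{ij}$); both send $0$ to $0$. A matrix representation $\pi$ is semiunitary if $\pi(s)\pi(s)^{*}\pi(s)=\pi(s)$ for all $s$ ($^{*}$ = conjugate transpose). $E$ is the identity matrix. A semigroup is inverse if every element $a$ has a unique $b$ with $aba=a$, $bab=b$. *)

theory Defs
  imports "HOL-Algebra.Group" "Jordan_Normal_Form.Schur_Decomposition"
begin

(* Rees matrix semigroup M^0(I,J,G,P), I = {0..<m}, J = {0..<n} (0-based indices).
   G^0 = G \<union> {0} is modelled as 'g option: None = 0, Some a = a.
   P is given as p :: nat \<Rightarrow> nat \<Rightarrow> 'g option with p j i = p_{ji} (j \<in> J, i \<in> I).
   Elements of S: None = zero, Some (a,i,j) = (a)_{ij}. *)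

definition rees_carrier :: "('g,'b) monoid_scheme \<Rightarrow> nat \<Rightarrow> nat \<Rightarrow> ('g \<times> nat \<times> nat) option set" where
  "rees_carrier G m n = insert None {Some (a,i,j) | a i j. a \<in> carrier G \<and> i < m \<and> j < n}"

definition rees_mult :: "('g,'b) monoid_scheme \<Rightarrow> (nat \<Rightarrow> nat \<Rightarrow> 'g option) \<Rightarrow>
    ('g \<times> nat \<times> nat) option \<Rightarrow> ('g \<times> nat \<times> nat) option \<Rightarrow> ('g \<times> nat \<times> nat) option" where
  "rees_mult G p x y = (case x of None \<Rightarrow> None | Some (a,i,j) \<Rightarrow>
      (case y of None \<Rightarrow> None | Some (b,k,l) \<Rightarrow>
        (case p j k of None \<Rightarrow> None | Some c \<Rightarrow> Some (a \<otimes>\<^bsub>G\<^esub> c \<otimes>\<^bsub>G\<^esub> b, i, l))))"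

definition sandwich_matrix :: "('g,'b) monoid_scheme \<Rightarrow> nat \<Rightarrow> nat \<Rightarrow> (nat \<Rightarrow> nat \<Rightarrow> 'g option) \<Rightarrow> bool" where
  "sandwich_matrix G m n p \<longleftrightarrow> (\<forall>j<n. \<forall>i<m. p j i \<in> insert None (Some ` carrier G))"

definition rees_regular :: "nat \<Rightarrow> nat \<Rightarrow> (nat \<Rightarrow> nat \<Rightarrow> 'g option) \<Rightarrow> bool" where
  "rees_regular m n p \<longleftrightarrow> (\<forall>j<n. \<exists>i<m. p j i \<noteq> None) \<and> (\<forall>i<m. \<exists>j<n. p j i \<noteq> None)"

definition matrix_rep :: "('g,'b) monoid_scheme \<Rightarrow> nat \<Rightarrow> ('g \<Rightarrow> complex mat) \<Rightarrow> bool" where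
  "matrix_rep G k \<sigma> \<longleftrightarrow>
     (\<forall>a\<in>carrier G. \<sigma> a \<in> carrier_mat k k \<and> invertible_mat (\<sigma> a)) \<and>
     (\<forall>a\<in>carrier G. \<forall>b\<in>carrier G. \<sigma> (a \<otimes>\<^bsub>G\<^esub> b) = \<sigma> a * \<sigma> b)"

definition sigma0 :: "nat \<Rightarrow> ('g \<Rightarrow> complex mat) \<Rightarrow> 'g option \<Rightarrow> complex mat" where
  "sigma0 k \<sigma> x = (case x of None \<Rightarrow> 0\<^sub>m k k | Some a \<Rightarrow> \<sigma> a)"

definition lmul0 :: "('g,'b) monoid_scheme \<Rightarrow> 'g \<Rightarrow> 'g option \<Rightarrow> 'g option" where
  "lmul0 G a x = map_option (\<lambda>c. a \<otimes>\<^bsub>G\<^esub> c) x"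

definition rmul0 :: "('g,'b) monoid_scheme \<Rightarrow> 'g option \<Rightarrow> 'g \<Rightarrow> 'g option" where
  "rmul0 G x a = map_option (\<lambda>c. c \<otimes>\<^bsub>G\<^esub> a) x"

(* pi^l((a)_{ij}): m x m block matrix (blocks k x k), (i,l) block sigma(a p_{jl}), others zero *)
definition pi_left :: "('g,'b) monoid_scheme \<Rightarrow> nat \<Rightarrow> nat \<Rightarrow> (nat \<Rightarrow> nat \<Rightarrow> 'g option) \<Rightarrow> ('g \<Rightarrow> complex mat)
    \<Rightarrow> ('g \<times> nat \<times> nat) option \<Rightarrow> complex mat" where
  "pi_left G m k p \<sigma> s = (case s of None \<Rightarrow> 0\<^sub>m (m*k) (m*k) | Some (a,i,j) \<Rightarrow>
     mat (m*k) (m*k) (\<lambda>(r,c). if r div k = i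
        then sigma0 k \<sigma> (lmul0 G a (p j (c div k))) $$ (r mod k, c mod k) else 0))"

(* pi^r((a)_{ij}): n x n block matrix, (l,j) block sigma(p_{li} a), others zero *)
definition pi_right :: "('g,'b) monoid_scheme \<Rightarrow> nat \<Rightarrow> nat \<Rightarrow> (nat \<Rightarrow> nat \<Rightarrow> 'g option) \<Rightarrow> ('g \<Rightarrow> complex mat)
    \<Rightarrow> ('g \<times> nat \<times> nat) option \<Rightarrow> complex mat" where
  "pi_right G n k p \<sigma> s = (case s of None \<Rightarrow> 0\<^sub>m (n*k) (n*k) | Some (a,i,j) \<Rightarrow>
     mat (n*k) (n*k) (\<lambda>(r,c). if c div k = j
        then sigma0 k \<sigma> (rmul0 G (p (r div k) i) a) $$ (r mod k, c mod k) else 0))"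

definition semiunitary :: "'s set \<Rightarrow> ('s \<Rightarrow> complex mat) \<Rightarrow> bool" where
  "semiunitary S \<pi> \<longleftrightarrow> (\<forall>s\<in>S. \<pi> s * mat_adjoint (\<pi> s) * \<pi> s = \<pi> s)"

definition inverse_semigroup :: "'s set \<Rightarrow> ('s \<Rightarrow> 's \<Rightarrow> 's) \<Rightarrow> bool" where
  "inverse_semigroup S f \<longleftrightarrow> (\<forall>a\<in>S. \<exists>!b. b \<in> S \<and> f (f a b) a = a \<and> f (f b a) b = b)"

end

theory Submission
  imports Defs
begin

lemma adj_eq: "mat_adjoint (A::complex mat) = mat (dim_col A) (dim_row A) (\<lambda>(i,j). cnj (A $$ (j,i)))"
  unfolding mat_adjoint_def
  by (rule eq_matI) (auto simp: mat_of_rows_def)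

lemma sum_block: fixes f :: "nat \<Rightarrow> 'a::comm_monoid_add" shows "(\<Sum>t\<in>{0..<m*k}. f t) = (\<Sum>l<m. \<Sum>v<k. f (l*k+v))"
proof (induction m)
  case 0 then show ?case by simp
next
  case (Suc m)
  have "(\<Sum>t\<in>{0..<Suc m*k}. f t) = (\<Sum>t\<in>{0..<m*k}. f t) + (\<Sum>t\<in>{m*k..<m*k+k}. f t)"
    by (simp add: sum.atLeastLessThan_concat add.commute)
  also have "(\<Sum>t\<in>{m*k..<m*k+k}. f t) = (\<Sum>v<k. f (m*k+v))"
    by (simp add: sum.shift_bounds_nat_ivl[where m=0 and k="m*k", simplified] lessThan_atLeast0 add.commute)
  finally show ?case using Suc by simp
qed

lemma dm_simps: "v < (k::nat) \<Longrightarrow> (l*k+v) div k = l" "v < (k::nat) \<Longrightarrow> (l*k+v) mod k = v"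
proof -
  assume "v < k" then have "k > 0" by simp
  then show "(l*k+v) div k = l" using \<open>v<k\<close> by (simp add: add.commute)
next
  assume "v < k" then show "(l*k+v) mod k = v" by (simp add: add.commute)
qed

lemma lk_less: "l < m \<Longrightarrow> v < (k::nat) \<Longrightarrow> l*k+v < m*k"
proof -
  assume "l < m" "v < k"
  then have "l*k + v < l*k + k" by simp
  also have "\<dots> = Suc l * k" by simp
  also have "\<dots> \<le> m * k" using \<open>l<m\<close> by (intro mult_le_mono1) simp
  finally show ?thesis .
qed

lemma sum_block1: fixes f :: "nat \<Rightarrow> 'a::comm_monoid_add"
  assumes "i < m" "\<And>t. t < m*k \<Longrightarrow> t div k \<noteq> i \<Longrightarrow> f t = 0"
  shows "(\<Sum>t\<in>{0..<m*k}. f t) = (\<Sum>v<k. f (i*k+v))"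
proof -
  have "(\<Sum>t\<in>{0..<m*k}. f t) = (\<Sum>l<m. \<Sum>v<k. f (l*k+v))" by (rule sum_block)
  also have "\<dots> = (\<Sum>v<k. f (i*k+v)) + (\<Sum>l\<in>{..<m}-{i}. \<Sum>v<k. f (l*k+v))"
    using assms(1) by (subst sum.remove[of _ i]) auto
  also have "(\<Sum>l\<in>{..<m}-{i}. \<Sum>v<k. f (l*k+v)) = 0"
  proof (rule sum.neutral, rule ballI, rule sum.neutral, rule ballI)
    fix l v assume l: "l \<in> {..<m}-{i}" and v: "v \<in> {..<k}"
    then show "f (l*k+v) = 0" using assms(2)[of "l*k+v"] lk_less[of l m v k] by auto
  qed
  finally show ?thesis by simp
qed

lemma left_entry:
  fixes F :: "nat \<Rightarrow> nat \<Rightarrow> nat \<Rightarrow> complex"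
  assumes X: "X = mat (m*k) (m*k) (\<lambda>(r,c). if r div k = i then F (c div k) (r mod k) (c mod k) else 0)"
    and i: "i < m" and x: "x < k" and l': "l' < m" and y: "y < k"
  shows "(X * mat_adjoint X * X) $$ (i*k+x, l'*k+y) =
     (\<Sum>x'<k. (\<Sum>l<m. \<Sum>v<k. F l x v * cnj (F l x' v)) * F l' x' y)"
proof -
  have ix: "i*k+x < m*k" using lk_less[OF i x] .
  have ly: "l'*k+y < m*k" using lk_less[OF l' y] .
  have XX: "\<And>x'. x' < k \<Longrightarrow> (X * mat_adjoint X) $$ (i*k+x, i*k+x') = (\<Sum>l<m. \<Sum>v<k. F l x v * cnj (F l x' v))"
  proof -
    fix x' assume x': "x' < k"
    have ix': "i*k+x' < m*k" using lk_less[OF i x'] .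
    have "(X * mat_adjoint X) $$ (i*k+x, i*k+x') = (\<Sum>u\<in>{0..<m*k}. X $$ (i*k+x, u) * cnj (X $$ (i*k+x', u)))"
      using ix ix' by (simp add: X adj_eq scalar_prod_def)
    also have "\<dots> = (\<Sum>u\<in>{0..<m*k}. F (u div k) x (u mod k) * cnj (F (u div k) x' (u mod k)))"
      using ix ix' x x' by (intro sum.cong) (auto simp: X dm_simps)
    also have "\<dots> = (\<Sum>l<m. \<Sum>v<k. F l x v * cnj (F l x' v))"
      by (subst sum_block) (simp add: dm_simps)
    finally show "(X * mat_adjoint X) $$ (i*k+x, i*k+x') = (\<Sum>l<m. \<Sum>v<k. F l x v * cnj (F l x' v))" .
  qed
  have "(X * mat_adjoint X * X) $$ (i*k+x, l'*k+y) = (\<Sum>t\<in>{0..<m*k}. (X * mat_adjoint X) $$ (i*k+x, t) * X $$ (t, l'*k+y))"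
    using ix ly by (simp add: X adj_eq scalar_prod_def)
  also have "\<dots> = (\<Sum>x'<k. (X * mat_adjoint X) $$ (i*k+x, i*k+x') * X $$ (i*k+x', l'*k+y))"
    by (rule sum_block1[OF i]) (simp add: X ly)
  also have "\<dots> = (\<Sum>x'<k. (\<Sum>l<m. \<Sum>v<k. F l x v * cnj (F l x' v)) * F l' x' y)"
    using ly y apply (intro sum.cong refl) apply (subst XX) apply simp apply (simp add: X lk_less[OF i] dm_simps) done
  finally show ?thesis .
qed

lemma right_entry:
  fixes F :: "nat \<Rightarrow> nat \<Rightarrow> nat \<Rightarrow> complex"
  assumes X: "X = mat (n*k) (n*k) (\<lambda>(r,c). if c div k = j then F (r div k) (r mod k) (c mod k) else 0)"
    and j: "j < n" and x: "x < k" and l': "l' < n" and y: "y < k"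
  shows "(X * mat_adjoint X * X) $$ (l'*k+x, j*k+y) =
     (\<Sum>y'<k. F l' x y' * (\<Sum>l<n. \<Sum>u<k. cnj (F l u y') * F l u y))"
proof -
  have jy: "j*k+y < n*k" using lk_less[OF j y] .
  have lx: "l'*k+x < n*k" using lk_less[OF l' x] .
  have XX: "\<And>t. t < n*k \<Longrightarrow> (X * mat_adjoint X) $$ (l'*k+x, t) = (\<Sum>y'<k. F l' x y' * cnj (F (t div k) (t mod k) y'))"
  proof -
    fix t assume t: "t < n*k"
    have "(X * mat_adjoint X) $$ (l'*k+x, t) = (\<Sum>u\<in>{0..<n*k}. X $$ (l'*k+x, u) * cnj (X $$ (t, u)))"
      using lx t by (simp add: X adj_eq scalar_prod_def)
    also have "\<dots> = (\<Sum>y'<k. X $$ (l'*k+x, j*k+y') * cnj (X $$ (t, j*k+y')))"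
      by (rule sum_block1[OF j]) (simp add: X lx t)
    also have "\<dots> = (\<Sum>y'<k. F l' x y' * cnj (F (t div k) (t mod k) y'))"
      using lx t x by (intro sum.cong refl) (simp add: X lk_less[OF j] dm_simps)
    finally show "(X * mat_adjoint X) $$ (l'*k+x, t) = (\<Sum>y'<k. F l' x y' * cnj (F (t div k) (t mod k) y'))" .
  qed
  have "(X * mat_adjoint X * X) $$ (l'*k+x, j*k+y) = (\<Sum>t\<in>{0..<n*k}. (X * mat_adjoint X) $$ (l'*k+x, t) * X $$ (t, j*k+y))"
    using lx jy by (simp add: X adj_eq scalar_prod_def)
  also have "\<dots> = (\<Sum>t\<in>{0..<n*k}. (\<Sum>y'<k. F l' x y' * cnj (F (t div k) (t mod k) y')) * F (t div k) (t mod k) y)"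
    using jy y apply (intro sum.cong refl) apply (subst XX) apply simp apply (simp add: X dm_simps) done
  also have "\<dots> = (\<Sum>l<n. \<Sum>u<k. (\<Sum>y'<k. F l' x y' * cnj (F l u y')) * F l u y)"
    by (subst sum_block) (simp add: dm_simps)
  also have "\<dots> = (\<Sum>y'<k. F l' x y' * (\<Sum>l<n. \<Sum>u<k. cnj (F l u y') * F l u y))"
    by (simp add: sum_distrib_left sum_distrib_right mult.assoc) (subst sum.swap, rule sum.cong, simp, subst sum.swap, simp)
  finally show ?thesis .
qed

lemma sum_if_const: "(\<Sum>l<(m::nat). if P l then T else 0) = of_nat (card {l. l<m \<and> P l}) * (T::'a::semiring_1)"
  using sum.inter_filter[of "{..<m}" "\<lambda>_. T" P] by simp

lemma adj_carrier: "(A::complex mat) \<in> carrier_mat k k \<Longrightarrow> mat_adjoint A \<in> carrier_mat k k"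
  by (simp add: adj_eq)

lemma adj_one: "mat_adjoint (1\<^sub>m k :: complex mat) = 1\<^sub>m k"
  by (rule eq_matI) (auto simp: adj_eq)

lemma adj_mult_entry: "(A::complex mat) \<in> carrier_mat k k \<Longrightarrow> x < k \<Longrightarrow> x' < k \<Longrightarrow>
   (A * mat_adjoint A) $$ (x,x') = (\<Sum>v<k. A $$ (x,v) * cnj (A $$ (x',v)))"
  by (simp add: adj_eq scalar_prod_def atLeast0LessThan)

lemma adj_mult_entry2: "(A::complex mat) \<in> carrier_mat k k \<Longrightarrow> y' < k \<Longrightarrow> y < k \<Longrightarrow>
   (mat_adjoint A * A) $$ (y',y) = (\<Sum>u<k. cnj (A $$ (u,y')) * A $$ (u,y))"
  by (simp add: adj_eq scalar_prod_def atLeast0LessThan)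

lemma unit_scalar:
  assumes A: "(A::complex mat) \<in> carrier_mat k k" and k: "k > 0" and U: "A * mat_adjoint A = 1\<^sub>m k"
    and c: "\<And>x y. x<k \<Longrightarrow> y<k \<Longrightarrow> c * A$$(x,y) = A$$(x,y)"
  shows "c = 1"
proof -
  have "c \<cdot>\<^sub>m A = A" using A c by (intro eq_matI) auto
  then have "c \<cdot>\<^sub>m (A * mat_adjoint A) = A * mat_adjoint A"
    using mult_smult_assoc_mat[OF A adj_carrier[OF A], of c] by simp
  then have "c \<cdot>\<^sub>m 1\<^sub>m k = (1\<^sub>m k :: complex mat)" using U by simp
  then have "(c \<cdot>\<^sub>m 1\<^sub>m k) $$ (0,0) = (1\<^sub>m k :: complex mat) $$ (0,0)" by simp
  then show ?thesis using k by simp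
qed

lemma idem_inv_one:
  assumes A: "(A::complex mat) \<in> carrier_mat k k" and inv: "invertible_mat A" and idem: "A * A = A"
  shows "A = 1\<^sub>m k"
proof -
  from inv obtain B where AB: "A * B = 1\<^sub>m (dim_row A)" and BA: "B * A = 1\<^sub>m (dim_row B)"
    unfolding invertible_mat_def inverts_mat_def by blast
  have AB': "A * B = 1\<^sub>m k" using AB A by simp
  have "dim_col B = k" using arg_cong[OF AB', of dim_col] by simp
  moreover have "dim_row B = k" using arg_cong[OF BA, of dim_col] A by simp
  ultimately have B: "B \<in> carrier_mat k k" by auto
  have "A = A * (A * B)" using AB' A by simp
  also have "\<dots> = (A * A) * B" using A B by simp
  also have "\<dots> = 1\<^sub>m k" using idem AB' by simp
  finally show ?thesis .
qed

lemma cancel_right_inv: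
  assumes A: "(A::complex mat) \<in> carrier_mat k k" and inv: "invertible_mat A"
    and C: "C \<in> carrier_mat k k" and eq: "C * A = A"
  shows "C = 1\<^sub>m k"
proof -
  from inv obtain B where AB: "A * B = 1\<^sub>m (dim_row A)" and BA: "B * A = 1\<^sub>m (dim_row B)"
    unfolding invertible_mat_def inverts_mat_def by blast
  have AB': "A * B = 1\<^sub>m k" using AB A by simp
  have "dim_col B = k" using arg_cong[OF AB', of dim_col] by simp
  moreover have "dim_row B = k" using arg_cong[OF BA, of dim_col] A by simp
  ultimately have B: "B \<in> carrier_mat k k" by auto
  have "C = C * (A * B)" using AB' C by simp
  also have "\<dots> = (C * A) * B" using A B C by simp
  also have "\<dots> = 1\<^sub>m k" using eq AB' by simp
  finally show ?thesis .
qed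

lemma delta_sum: "x < k \<Longrightarrow> (\<Sum>x'<k. (r * (1\<^sub>m k :: complex mat) $$ (x,x')) * f x') = r * f x"
proof -
  assume x: "x < k"
  have "(\<Sum>x'<k. (r * (1\<^sub>m k :: complex mat) $$ (x,x')) * f x') = (\<Sum>x'<k. if x' = x then r * f x else 0)"
    using x by (intro sum.cong) auto
  then show ?thesis using x by simp
qed

lemma delta_sum2: "y < k \<Longrightarrow> (\<Sum>y'<k. f y' * (r * (1\<^sub>m k :: complex mat) $$ (y',y))) = r * f y"
proof -
  assume y: "y < k"
  have "(\<Sum>y'<k. f y' * (r * (1\<^sub>m k :: complex mat) $$ (y',y))) = (\<Sum>y'<k. if y' = y then r * f y else 0)"
    using y by (intro sum.cong) auto
  then show ?thesis using y by simp
qed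

lemma (in group) cancA: "x \<in> carrier G \<Longrightarrow> y \<in> carrier G \<Longrightarrow> x \<otimes> (inv x \<otimes> y) = y"
  by (simp add: m_assoc[symmetric])
lemma (in group) cancB: "x \<in> carrier G \<Longrightarrow> y \<in> carrier G \<Longrightarrow> inv x \<otimes> (x \<otimes> y) = y"
  by (simp add: m_assoc[symmetric])

lemma card1_eq: assumes rows: "card A = 1"
  and hh: "l1 \<in> A" "l2 \<in> A"
  shows "l1 = l2"
proof -
  obtain z where z: "A = {z}"
    using card_1_singletonE[OF rows] by metis
  show ?thesis using hh unfolding z by simp
qed

theorem mainTheorem6:
  fixes G :: "('g,'b) monoid_scheme"
    and m n k :: nat
    and p :: "nat \<Rightarrow> nat \<Rightarrow> 'g option"
    and \<sigma> :: "'g \<Rightarrow> complex mat"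
  assumes "group G" and "finite (carrier G)"
    and "m > 0" and "n > 0" and "k > 0"
    and "sandwich_matrix G m n p"
    and "rees_regular m n p"
    and "p 0 0 = Some \<one>\<^bsub>G\<^esub>"
    and "\<forall>l<m. p 0 l \<in> {None, Some \<one>\<^bsub>G\<^esub>}"
    and "matrix_rep G k \<sigma>"
    and "semiunitary (rees_carrier G m n) (pi_left G m k p \<sigma>)"
    and "semiunitary (rees_carrier G m n) (pi_right G n k p \<sigma>)"
  shows "(\<forall>a\<in>carrier G. \<sigma> a * mat_adjoint (\<sigma> a) = 1\<^sub>m k) \<and>
         inverse_semigroup (rees_carrier G m n) (rees_mult G p)"
proof -
  interpret G: group G by fact
  have m: "m > 0" and n: "n > 0" and k: "k > 0" by fact+
  have sigc: "\<And>a. a \<in> carrier G \<Longrightarrow> \<sigma> a \<in> carrier_mat k k"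
    and siginv: "\<And>a. a \<in> carrier G \<Longrightarrow> invertible_mat (\<sigma> a)"
    and sigmult: "\<And>a b. a \<in> carrier G \<Longrightarrow> b \<in> carrier G \<Longrightarrow> \<sigma> (a \<otimes>\<^bsub>G\<^esub> b) = \<sigma> a * \<sigma> b"
    using assms(10) unfolding matrix_rep_def by auto
  have sig1: "\<sigma> \<one>\<^bsub>G\<^esub> = 1\<^sub>m k"
    using idem_inv_one[OF sigc[OF G.one_closed] siginv[OF G.one_closed]] sigmult[OF G.one_closed G.one_closed] by simp
  have pcar: "\<And>j l g. j < n \<Longrightarrow> l < m \<Longrightarrow> p j l = Some g \<Longrightarrow> g \<in> carrier G"
    using assms(6) unfolding sandwich_matrix_def by force
  have pl0: "\<And>l. l < m \<Longrightarrow> p 0 l = None \<or> p 0 l = Some \<one>\<^bsub>G\<^esub>" using assms(9) by auto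
  define FL where "FL a j l x v = sigma0 k \<sigma> (lmul0 G a (p j l)) $$ (x,v)" for a j l x v
  define FR where "FR a i l u y = sigma0 k \<sigma> (rmul0 G (p l i) a) $$ (u,y)" for a i l u y
  have LE: "(\<Sum>x'<k. (\<Sum>l<m. \<Sum>v<k. FL a j l x v * cnj (FL a j l x' v)) * FL a j l' x' y) = FL a j l' x y"
    if a: "a \<in> carrier G" and i: "i < m" and j: "j < n" and x: "x < k" and l': "l' < m" and y: "y < k" for a i j x l' y
  proof -
    define X where "X = pi_left G m k p \<sigma> (Some (a,i,j))"
    have Xd: "X = mat (m*k) (m*k) (\<lambda>(r,c). if r div k = i then FL a j (c div k) (r mod k) (c mod k) else 0)"
      unfolding X_def pi_left_def FL_def by simp
    have "Some (a,i,j) \<in> rees_carrier G m n" using a i j by (simp add: rees_carrier_def)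
    then have su: "X * mat_adjoint X * X = X" using assms(11) unfolding semiunitary_def X_def by blast
    have "(X * mat_adjoint X * X) $$ (i*k+x, l'*k+y) =
      (\<Sum>x'<k. (\<Sum>l<m. \<Sum>v<k. FL a j l x v * cnj (FL a j l x' v)) * FL a j l' x' y)"
      by (rule left_entry[OF Xd i x l' y])
    moreover have "X $$ (i*k+x, l'*k+y) = FL a j l' x y"
      using lk_less[OF i x] lk_less[OF l' y] x y by (simp add: Xd dm_simps)
    ultimately show ?thesis using su by simp
  qed
  have RE: "(\<Sum>y'<k. FR a i l' x y' * (\<Sum>l<n. \<Sum>u<k. cnj (FR a i l u y') * FR a i l u y)) = FR a i l' x y"
    if a: "a \<in> carrier G" and i: "i < m" and x: "x < k" and l': "l' < n" and y: "y < k" for a i x l' y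
  proof -
    define X where "X = pi_right G n k p \<sigma> (Some (a,i,0))"
    have Xd: "X = mat (n*k) (n*k) (\<lambda>(r,c). if c div k = 0 then FR a i (r div k) (r mod k) (c mod k) else 0)"
      unfolding X_def pi_right_def FR_def by simp
    have "Some (a,i,0) \<in> rees_carrier G m n" using a i n by (simp add: rees_carrier_def)
    then have su: "X * mat_adjoint X * X = X" using assms(12) unfolding semiunitary_def X_def by blast
    have "(X * mat_adjoint X * X) $$ (l'*k+x, 0*k+y) =
      (\<Sum>y'<k. FR a i l' x y' * (\<Sum>l<n. \<Sum>u<k. cnj (FR a i l u y') * FR a i l u y))"
      by (rule right_entry[OF Xd n x l' y])
    moreover have "X $$ (l'*k+x, 0*k+y) = FR a i l' x y"
      using lk_less[OF l' x] lk_less[OF n y] x y by (simp add: Xd dm_simps)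
    ultimately show ?thesis using su by simp
  qed
  define c where "c = card {l. l < m \<and> p 0 l = Some \<one>\<^bsub>G\<^esub>}"
  have FL0: "FL a 0 l x v = (if p 0 l = Some \<one>\<^bsub>G\<^esub> then \<sigma> a $$ (x,v) else 0)"
    if a: "a \<in> carrier G" and l: "l < m" and x: "x < k" and v: "v < k" for a l x v
    using pl0[OF l] a x v by (auto simp: FL_def lmul0_def sigma0_def)
  have P1: "of_nat c \<cdot>\<^sub>m (\<sigma> a * mat_adjoint (\<sigma> a) * \<sigma> a) = \<sigma> a" if a: "a \<in> carrier G" for a
  proof (rule eq_matI)
    have A: "\<sigma> a \<in> carrier_mat k k" using sigc[OF a] .
    show "dim_row (of_nat c \<cdot>\<^sub>m (\<sigma> a * mat_adjoint (\<sigma> a) * \<sigma> a)) = dim_row (\<sigma> a)"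
      using A by (simp add: adj_eq)
    show "dim_col (of_nat c \<cdot>\<^sub>m (\<sigma> a * mat_adjoint (\<sigma> a) * \<sigma> a)) = dim_col (\<sigma> a)"
      using A by (simp add: adj_eq)
    fix x y assume "x < dim_row (\<sigma> a)" "y < dim_col (\<sigma> a)"
    then have x: "x < k" and y: "y < k" using A by auto
    define M where "M = \<sigma> a * mat_adjoint (\<sigma> a)"
    have Mc: "M \<in> carrier_mat k k" using A by (simp add: M_def adj_eq)
    have inner: "(\<Sum>l<m. \<Sum>v<k. FL a 0 l x v * cnj (FL a 0 l x' v)) = of_nat c * M $$ (x,x')"
      if x': "x' < k" for x'
    proof -
      have "(\<Sum>l<m. \<Sum>v<k. FL a 0 l x v * cnj (FL a 0 l x' v)) =
         (\<Sum>l<m. if p 0 l = Some \<one>\<^bsub>G\<^esub> then M $$ (x,x') else 0)"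
        using x x' a A by (intro sum.cong refl) (simp add: FL0 adj_mult_entry M_def)
      then show ?thesis by (simp add: sum_if_const c_def)
    qed
    have e1: "(\<Sum>x'<k. (of_nat c * M $$ (x,x')) * \<sigma> a $$ (x',y)) = \<sigma> a $$ (x,y)"
      using LE[OF a m n x m y] inner FL0[OF a m x y] FL0[OF a m] y assms(8) by simp
    have "(of_nat c \<cdot>\<^sub>m (M * \<sigma> a)) $$ (x,y) = of_nat c * (\<Sum>x'<k. M $$ (x,x') * \<sigma> a $$ (x',y))"
      using A Mc x y by (simp add: scalar_prod_def atLeast0LessThan)
    also have "\<dots> = \<sigma> a $$ (x,y)" using e1 by (simp add: sum_distrib_left mult.assoc)
    finally show "(of_nat c \<cdot>\<^sub>m (\<sigma> a * mat_adjoint (\<sigma> a) * \<sigma> a)) $$ (x,y) = \<sigma> a $$ (x,y)"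
      by (simp add: M_def)
  qed
  have c1: "c = 1"
  proof -
    have "of_nat c \<cdot>\<^sub>m (1\<^sub>m k :: complex mat) = 1\<^sub>m k"
      using P1[OF G.one_closed] by (simp add: sig1 adj_one)
    then have "(of_nat c \<cdot>\<^sub>m (1\<^sub>m k :: complex mat)) $$ (0,0) = (1\<^sub>m k :: complex mat) $$ (0,0)" by simp
    then show ?thesis using k by simp
  qed
  have U: "\<sigma> a * mat_adjoint (\<sigma> a) = 1\<^sub>m k" if a: "a \<in> carrier G" for a
  proof (rule cancel_right_inv[OF sigc[OF a] siginv[OF a]])
    show "\<sigma> a * mat_adjoint (\<sigma> a) \<in> carrier_mat k k" using sigc[OF a] by (simp add: adj_eq)
    have "1 \<cdot>\<^sub>m (\<sigma> a * mat_adjoint (\<sigma> a) * \<sigma> a) = \<sigma> a" using P1[OF a] c1 by simp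
    moreover have "1 \<cdot>\<^sub>m (\<sigma> a * mat_adjoint (\<sigma> a) * \<sigma> a) = \<sigma> a * mat_adjoint (\<sigma> a) * \<sigma> a"
      by (rule eq_matI) auto
    ultimately show "\<sigma> a * mat_adjoint (\<sigma> a) * \<sigma> a = \<sigma> a" by simp
  qed
  have U': "mat_adjoint (\<sigma> a) * \<sigma> a = 1\<^sub>m k" if a: "a \<in> carrier G" for a
    using mat_mult_left_right_inverse[OF sigc[OF a] adj_carrier[OF sigc[OF a]] U[OF a]] .
  have rows: "card {l. l < m \<and> p j l \<noteq> None} = 1" if j: "j < n" for j
  proof -
    obtain l' g where l': "l' < m" and g: "p j l' = Some g"
      using assms(7) j unfolding rees_regular_def by blast
    have gc: "g \<in> carrier G" using pcar[OF j l' g] .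
    define r where "r = card {l. l < m \<and> p j l \<noteq> None}"
    have inner: "(\<Sum>l<m. \<Sum>v<k. FL \<one>\<^bsub>G\<^esub> j l x v * cnj (FL \<one>\<^bsub>G\<^esub> j l x' v)) = of_nat r * (1\<^sub>m k :: complex mat) $$ (x,x')"
      if x: "x < k" and x': "x' < k" for x x'
    proof -
      have "(\<Sum>l<m. \<Sum>v<k. FL \<one>\<^bsub>G\<^esub> j l x v * cnj (FL \<one>\<^bsub>G\<^esub> j l x' v)) =
         (\<Sum>l<m. if p j l \<noteq> None then (1\<^sub>m k :: complex mat) $$ (x,x') else 0)"
      proof (intro sum.cong refl)
        fix l assume "l \<in> {..<m}"
        then have l: "l < m" by simp
        show "(\<Sum>v<k. FL \<one>\<^bsub>G\<^esub> j l x v * cnj (FL \<one>\<^bsub>G\<^esub> j l x' v)) =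
           (if p j l \<noteq> None then (1\<^sub>m k :: complex mat) $$ (x,x') else 0)"
        proof (cases "p j l")
          case None
          then show ?thesis using x x' by (simp add: FL_def lmul0_def sigma0_def)
        next
          case (Some h)
          have hc: "h \<in> carrier G" using pcar[OF j l Some] .
          have "(\<Sum>v<k. FL \<one>\<^bsub>G\<^esub> j l x v * cnj (FL \<one>\<^bsub>G\<^esub> j l x' v)) =
             (\<sigma> h * mat_adjoint (\<sigma> h)) $$ (x,x')"
            using x x' hc Some by (simp add: FL_def lmul0_def sigma0_def adj_mult_entry[OF sigc[OF hc]])
          then show ?thesis using U[OF hc] Some by simp
        qed
      qed
      then show ?thesis by (simp add: sum_if_const r_def)
    qed
    have "of_nat r = (1::complex)"
    proof (rule unit_scalar[OF sigc[OF gc] k U[OF gc]])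
      fix x y assume x: "x < k" and y: "y < k"
      have "(\<Sum>x'<k. (of_nat r * (1\<^sub>m k :: complex mat) $$ (x,x')) * FL \<one>\<^bsub>G\<^esub> j l' x' y) = FL \<one>\<^bsub>G\<^esub> j l' x y"
        using LE[OF G.one_closed m j x l' y] inner[OF x] by simp
      then have "of_nat r * FL \<one>\<^bsub>G\<^esub> j l' x y = FL \<one>\<^bsub>G\<^esub> j l' x y" by (simp add: delta_sum[OF x])
      then show "of_nat r * \<sigma> g $$ (x,y) = \<sigma> g $$ (x,y)" using g gc by (simp add: FL_def lmul0_def sigma0_def)
    qed
    then show ?thesis by (simp add: r_def)
  qed
  have cols: "card {l. l < n \<and> p l i \<noteq> None} = 1" if i: "i < m" for i
  proof -
    obtain l' g where l': "l' < n" and g: "p l' i = Some g"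
      using assms(7) i unfolding rees_regular_def by blast
    have gc: "g \<in> carrier G" using pcar[OF l' i g] .
    define r where "r = card {l. l < n \<and> p l i \<noteq> None}"
    have inner: "(\<Sum>l<n. \<Sum>u<k. cnj (FR \<one>\<^bsub>G\<^esub> i l u y') * FR \<one>\<^bsub>G\<^esub> i l u y) = of_nat r * (1\<^sub>m k :: complex mat) $$ (y',y)"
      if y: "y < k" and y': "y' < k" for y y'
    proof -
      have "(\<Sum>l<n. \<Sum>u<k. cnj (FR \<one>\<^bsub>G\<^esub> i l u y') * FR \<one>\<^bsub>G\<^esub> i l u y) =
         (\<Sum>l<n. if p l i \<noteq> None then (1\<^sub>m k :: complex mat) $$ (y',y) else 0)"
      proof (intro sum.cong refl)
        fix l assume "l \<in> {..<n}"
        then have l: "l < n" by simp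
        show "(\<Sum>u<k. cnj (FR \<one>\<^bsub>G\<^esub> i l u y') * FR \<one>\<^bsub>G\<^esub> i l u y) =
           (if p l i \<noteq> None then (1\<^sub>m k :: complex mat) $$ (y',y) else 0)"
        proof (cases "p l i")
          case None
          then show ?thesis using y y' by (simp add: FR_def rmul0_def sigma0_def)
        next
          case (Some h)
          have hc: "h \<in> carrier G" using pcar[OF l i Some] .
          have "(\<Sum>u<k. cnj (FR \<one>\<^bsub>G\<^esub> i l u y') * FR \<one>\<^bsub>G\<^esub> i l u y) =
             (mat_adjoint (\<sigma> h) * \<sigma> h) $$ (y',y)"
            using y y' hc Some by (simp add: FR_def rmul0_def sigma0_def adj_mult_entry2[OF sigc[OF hc]])
          then show ?thesis using U'[OF hc] Some by simp
        qed
      qed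
      then show ?thesis by (simp add: sum_if_const r_def)
    qed
    have "of_nat r = (1::complex)"
    proof (rule unit_scalar[OF sigc[OF gc] k U[OF gc]])
      fix x y assume x: "x < k" and y: "y < k"
      have "(\<Sum>y'<k. FR \<one>\<^bsub>G\<^esub> i l' x y' * (of_nat r * (1\<^sub>m k :: complex mat) $$ (y',y))) = FR \<one>\<^bsub>G\<^esub> i l' x y"
        using RE[OF G.one_closed i x l' y] inner[OF y] by simp
      then have "of_nat r * FR \<one>\<^bsub>G\<^esub> i l' x y = FR \<one>\<^bsub>G\<^esub> i l' x y" by (simp add: delta_sum2[OF y])
      then show "of_nat r * \<sigma> g $$ (x,y) = \<sigma> g $$ (x,y)" using g gc by (simp add: FR_def rmul0_def sigma0_def)
    qed
    then show ?thesis by (simp add: r_def)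
  qed
  have rowU: "l1 = l2" if hh: "j < n" "l1 < m" "l2 < m" "p j l1 \<noteq> None" "p j l2 \<noteq> None" for j l1 l2
    by (rule card1_eq[OF rows[OF hh(1)]]) (use hh in simp_all)
  have colU: "l1 = l2" if hh: "i < m" "l1 < n" "l2 < n" "p l1 i \<noteq> None" "p l2 i \<noteq> None" for i l1 l2
    by (rule card1_eq[OF cols[OF hh(1)]]) (use hh in simp_all)
  have inv: "inverse_semigroup (rees_carrier G m n) (rees_mult G p)"
    unfolding inverse_semigroup_def
  proof
    fix s assume s: "s \<in> rees_carrier G m n"
    show "\<exists>!b. b \<in> rees_carrier G m n \<and> rees_mult G p (rees_mult G p s b) s = s \<and> rees_mult G p (rees_mult G p b s) b = b"
    proof (cases s)
      case None
      show ?thesis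
      proof (rule ex1I[of _ None])
        show "None \<in> rees_carrier G m n \<and> rees_mult G p (rees_mult G p s None) s = s \<and> rees_mult G p (rees_mult G p None s) None = None"
          using None by (simp add: rees_carrier_def rees_mult_def)
        fix b assume "b \<in> rees_carrier G m n \<and> rees_mult G p (rees_mult G p s b) s = s \<and> rees_mult G p (rees_mult G p b s) b = b"
        then have "rees_mult G p (rees_mult G p b s) b = b" by blast
        then show "b = None" using None by (simp add: rees_mult_def split: option.splits)
      qed
    next
      case (Some t)
      then obtain a i j where t: "s = Some (a,i,j)" and a: "a \<in> carrier G" and i: "i < m" and j: "j < n"
        using s by (auto simp: rees_carrier_def)
      obtain i' g1 where i': "i' < m" and g1: "p j i' = Some g1"
        using assms(7) j unfolding rees_regular_def by blast
      obtain j' g2 where j': "j' < n" and g2: "p j' i = Some g2"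
        using assms(7) i unfolding rees_regular_def by blast
      have g1c: "g1 \<in> carrier G" using pcar[OF j i' g1] .
      have g2c: "g2 \<in> carrier G" using pcar[OF j' i g2] .
      define c0 where "c0 = inv\<^bsub>G\<^esub> g1 \<otimes>\<^bsub>G\<^esub> inv\<^bsub>G\<^esub> a \<otimes>\<^bsub>G\<^esub> inv\<^bsub>G\<^esub> g2"
      have c0c: "c0 \<in> carrier G" using a g1c g2c by (simp add: c0_def)
      show ?thesis
      proof (rule ex1I[of _ "Some (c0, i', j')"])
        have e1: "rees_mult G p s (Some (c0, i', j')) = Some (a \<otimes>\<^bsub>G\<^esub> g1 \<otimes>\<^bsub>G\<^esub> c0, i, j')"
          by (simp add: rees_mult_def t g1)
        have e2: "rees_mult G p (Some (a \<otimes>\<^bsub>G\<^esub> g1 \<otimes>\<^bsub>G\<^esub> c0, i, j')) s = Some (a \<otimes>\<^bsub>G\<^esub> g1 \<otimes>\<^bsub>G\<^esub> c0 \<otimes>\<^bsub>G\<^esub> g2 \<otimes>\<^bsub>G\<^esub> a, i, j)"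
          by (simp add: rees_mult_def t g2)
        have e3: "rees_mult G p (Some (c0, i', j')) s = Some (c0 \<otimes>\<^bsub>G\<^esub> g2 \<otimes>\<^bsub>G\<^esub> a, i', j)"
          by (simp add: rees_mult_def t g2)
        have e4: "rees_mult G p (Some (c0 \<otimes>\<^bsub>G\<^esub> g2 \<otimes>\<^bsub>G\<^esub> a, i', j)) (Some (c0, i', j')) = Some (c0 \<otimes>\<^bsub>G\<^esub> g2 \<otimes>\<^bsub>G\<^esub> a \<otimes>\<^bsub>G\<^esub> g1 \<otimes>\<^bsub>G\<^esub> c0, i', j')"
          by (simp add: rees_mult_def g1)
        have q1: "a \<otimes>\<^bsub>G\<^esub> g1 \<otimes>\<^bsub>G\<^esub> c0 \<otimes>\<^bsub>G\<^esub> g2 \<otimes>\<^bsub>G\<^esub> a = a"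
          using a g1c g2c by (simp add: c0_def G.m_assoc G.cancA G.cancB)
        have q2: "c0 \<otimes>\<^bsub>G\<^esub> g2 \<otimes>\<^bsub>G\<^esub> a \<otimes>\<^bsub>G\<^esub> g1 \<otimes>\<^bsub>G\<^esub> c0 = c0"
          using a g1c g2c by (simp add: c0_def G.m_assoc G.cancA G.cancB)
        have mem: "Some (c0, i', j') \<in> rees_carrier G m n" using c0c i' j' by (simp add: rees_carrier_def)
        show "Some (c0, i', j') \<in> rees_carrier G m n \<and> rees_mult G p (rees_mult G p s (Some (c0, i', j'))) s = s \<and>
            rees_mult G p (rees_mult G p (Some (c0, i', j')) s) (Some (c0, i', j')) = Some (c0, i', j')"
          using mem e1 e2 e3 e4 q1 q2 t by simp
        fix b assume b: "b \<in> rees_carrier G m n \<and> rees_mult G p (rees_mult G p s b) s = s \<and> rees_mult G p (rees_mult G p b s) b = b"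
        then have bs: "rees_mult G p (rees_mult G p s b) s = s" by blast
        show "b = Some (c0, i', j')"
        proof (cases b)
          case None
          then show ?thesis using bs t by (simp add: rees_mult_def)
        next
          case (Some bb)
          then obtain c i2 j2 where bd: "b = Some (c,i2,j2)" and c: "c \<in> carrier G" and i2: "i2 < m" and j2: "j2 < n"
            using b by (auto simp: rees_carrier_def)
          obtain h1 where h1: "p j i2 = Some h1"
            using bs t bd by (cases "p j i2") (simp_all add: rees_mult_def)
          have ii: "i2 = i'" using rowU[OF j i2 i'] h1 g1 by simp
          obtain h2 where h2: "p j2 i = Some h2"
            using bs t bd h1 by (cases "p j2 i") (simp_all add: rees_mult_def)
          have jj: "j2 = j'" using colU[OF i j2 j'] h2 g2 by simp
          have eq: "a \<otimes>\<^bsub>G\<^esub> g1 \<otimes>\<^bsub>G\<^esub> c \<otimes>\<^bsub>G\<^esub> g2 \<otimes>\<^bsub>G\<^esub> a = a"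
            using bs t bd h1 h2 ii jj g1 g2 by (simp add: rees_mult_def)
          have eq0: "a \<otimes>\<^bsub>G\<^esub> g1 \<otimes>\<^bsub>G\<^esub> c0 \<otimes>\<^bsub>G\<^esub> g2 \<otimes>\<^bsub>G\<^esub> a = a"
            using a g1c g2c by (simp add: c0_def G.m_assoc G.cancA G.cancB)
          have "a \<otimes>\<^bsub>G\<^esub> (g1 \<otimes>\<^bsub>G\<^esub> (c \<otimes>\<^bsub>G\<^esub> (g2 \<otimes>\<^bsub>G\<^esub> a))) = a \<otimes>\<^bsub>G\<^esub> (g1 \<otimes>\<^bsub>G\<^esub> (c0 \<otimes>\<^bsub>G\<^esub> (g2 \<otimes>\<^bsub>G\<^esub> a)))"
            using eq eq0 a g1c g2c c c0c by (simp add: G.m_assoc)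
          then have "c \<otimes>\<^bsub>G\<^esub> (g2 \<otimes>\<^bsub>G\<^esub> a) = c0 \<otimes>\<^bsub>G\<^esub> (g2 \<otimes>\<^bsub>G\<^esub> a)"
            using a g1c g2c c c0c by (simp add: G.Units_l_cancel)
          then have "c = c0" using a g2c c c0c by (simp add: G.right_cancel)
          then show ?thesis using bd ii jj by simp
        qed
      qed
    qed
  qed
  show ?thesis using U inv by blast
qed
end
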